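(* Let $\rho_r\in(0,1)$, $\rho_w\in(0,1/2)$, and let $C_n\subseteq\{0,1\}^n$ be a (stochastic) code of rate $R$ that, over the $(\rho_r,\rho_w)$ adversarial wiretap channel, has decoding error at most $\delta_n$ against every adversary strategy and normalized equivocation $\eta_n=\Delta(C_n)/n$. Then for every sufficiently small $\xi>0$, over the $(\rho_r-\xi,\rho_w-\xi)$ random wiretap channel the code $C_n$ has decoding error at most $\delta_n+\exp(-\Omega(n))$ and normalized equivocation $H(\mathbf S\mid\mathbf Z)/n\ge \eta_n\bigl(1-\exp(-\Omega(n))\bigr)$, where the implied constants depend on $\rho_r,\rho_w,\xi$.
   Context: The $(\rho_r,\rho_w)$ adversarial wiretap channel: the transmitted codeword $x\in\{0,1\}^n$ encodes message $\mathbf S$; the adversary picks $\mathscr S\subseteq[n]$, $|\mathscr S|=\rho_r n$, sees $\mathbf V(\mathscr S)\in\{0,1,?\}^n$ (equal to $x_i$ on $\mathscr S$ and $?$ elsewhere), and adds an error of Hamming weight at most $\rho_w n$ whose distribution depends only on the code and the view; the receiver uses nearest-neighbor decoding. Decoding error is $\Pr[\hat{\mathbf S}\ne\mathbf S]$. With $\mathbf S$ uniform, the equivocation is $\Delta(C_n)=\min_{|\mathscr S|=\rho_r n}H(\mathbf S\mid\mathbf V(\mathscr S))$. The $(a,b)$ random wiretap channel sends $x$ through a binary erasure channel $\mathrm{BEC}(1-a)$ (each coordinate independently erased with probability $1-a$) to the eavesdropper, producing $\mathbf Z\in\{0,1,?\}^n$, and through a binary symmetric channel $\mathrm{BSC}(b)$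 to the receiver; its normalized equivocation is $H(\mathbf S\mid\mathbf Z)/n$ with $\mathbf S$ uniform. *)

theory Defs
  imports "HOL-Probability.Probability"
begin

definition hamming :: "bool list \<Rightarrow> bool list \<Rightarrow> nat" where
  "hamming x y = card {i. i < length x \<and> i < length y \<and> x ! i \<noteq> y ! i}"

definition weight :: "bool list \<Rightarrow> nat" where
  "weight e = card {i. i < length e \<and> e ! i}"

definition xor_word :: "bool list \<Rightarrow> bool list \<Rightarrow> bool list" where
  "xor_word x e = map2 (\<noteq>) x e"

definition is_code :: "nat \<Rightarrow> nat \<Rightarrow> (nat \<Rightarrow> bool list pmf) \<Rightarrow> bool" where
  "is_code n K enc \<longleftrightarrow> K \<ge> 1 \<and> (\<forall>m<K. set_pmf (enc m) \<subseteq> {x. length x = n})"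

definition nn_decoder :: "nat \<Rightarrow> nat \<Rightarrow> (nat \<Rightarrow> bool list pmf) \<Rightarrow> (bool list \<Rightarrow> nat) \<Rightarrow> bool" where
  "nn_decoder n K enc dec \<longleftrightarrow>
     (\<forall>y. length y = n \<longrightarrow> dec y < K \<and>
        (\<exists>x\<in>set_pmf (enc (dec y)). \<forall>m<K. \<forall>x'\<in>set_pmf (enc m). hamming x y \<le> hamming x' y))"

definition msg_pmf :: "nat \<Rightarrow> nat pmf" where
  "msg_pmf K = pmf_of_set {..<K}"

definition cond_entropy :: "('a \<times> 'b) pmf \<Rightarrow> real" where
  "cond_entropy p = - (\<Sum>ab\<in>set_pmf p.
      pmf p ab * log 2 (pmf p ab / pmf (map_pmf snd p) (snd ab)))"

text \<open>View of the adversary reading the positions in S: Some (x_i) on S, None (= ?) elsewhere.\<close>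
definition view :: "nat set \<Rightarrow> bool list \<Rightarrow> bool option list" where
  "view S x = map (\<lambda>i. if i \<in> S then Some (x ! i) else None) [0..<length x]"

definition adv_strategy :: "real \<Rightarrow> real \<Rightarrow> nat \<Rightarrow> nat set \<Rightarrow> (bool option list \<Rightarrow> bool list pmf) \<Rightarrow> bool" where
  "adv_strategy \<rho>r \<rho>w n S err \<longleftrightarrow>
     S \<subseteq> {..<n} \<and> card S = nat \<lfloor>\<rho>r * real n\<rfloor> \<and>
     (\<forall>v. \<forall>e\<in>set_pmf (err v). length e = n \<and> real (weight e) \<le> \<rho>w * real n)"

definition adv_error :: "nat \<Rightarrow> (nat \<Rightarrow> bool list pmf) \<Rightarrow> (bool list \<Rightarrow> nat) \<Rightarrow>
    nat set \<Rightarrow> (bool option list \<Rightarrow> bool list pmf) \<Rightarrow> real" where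
  "adv_error K enc dec S err = measure_pmf.prob
     (do { m \<leftarrow> msg_pmf K; x \<leftarrow> enc m; e \<leftarrow> err (view S x);
           return_pmf (m, dec (xor_word x e)) })
     {(m, m'). m' \<noteq> m}"

definition adv_view_joint :: "nat \<Rightarrow> (nat \<Rightarrow> bool list pmf) \<Rightarrow> nat set \<Rightarrow> (nat \<times> bool option list) pmf" where
  "adv_view_joint K enc S = do { m \<leftarrow> msg_pmf K; x \<leftarrow> enc m; return_pmf (m, view S x) }"

definition adv_equivocation :: "real \<Rightarrow> nat \<Rightarrow> nat \<Rightarrow> (nat \<Rightarrow> bool list pmf) \<Rightarrow> real" where
  "adv_equivocation \<rho>r n K enc =
     Min {cond_entropy (adv_view_joint K enc S) | S. S \<subseteq> {..<n} \<and> card S = nat \<lfloor>\<rho>r * real n\<rfloor>}"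

text \<open>BEC(1-a): each coordinate independently kept with probability a, else erased.\<close>
primrec bec_pmf :: "real \<Rightarrow> bool list \<Rightarrow> bool option list pmf" where
  "bec_pmf a [] = return_pmf []"
| "bec_pmf a (b # xs) = do { k \<leftarrow> bernoulli_pmf a; zs \<leftarrow> bec_pmf a xs;
                            return_pmf ((if k then Some b else None) # zs) }"

primrec bsc_pmf :: "real \<Rightarrow> bool list \<Rightarrow> bool list pmf" where
  "bsc_pmf p [] = return_pmf []"
| "bsc_pmf p (b # xs) = do { f \<leftarrow> bernoulli_pmf p; ys \<leftarrow> bsc_pmf p xs;
                            return_pmf ((b \<noteq> f) # ys) }"

definition rand_error :: "nat \<Rightarrow> (nat \<Rightarrow> bool list pmf) \<Rightarrow> (bool list \<Rightarrow> nat) \<Rightarrow> real \<Rightarrow> real" where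
  "rand_error K enc dec b = measure_pmf.prob
     (do { m \<leftarrow> msg_pmf K; x \<leftarrow> enc m; y \<leftarrow> bsc_pmf b x; return_pmf (m, dec y) })
     {(m, m'). m' \<noteq> m}"

definition rand_equivocation :: "nat \<Rightarrow> (nat \<Rightarrow> bool list pmf) \<Rightarrow> real \<Rightarrow> real" where
  "rand_equivocation K enc a = cond_entropy
     (do { m \<leftarrow> msg_pmf K; x \<leftarrow> enc m; z \<leftarrow> bec_pmf a x; return_pmf (m, z) })"

end

theory Submission
  imports Defs
begin


lemma log2_ge: "0 < y \<Longrightarrow> (1 - 1/y) / ln 2 \<le> log 2 y"
proof -
  assume y: "0 < y"
  have "ln (1/y) \<le> 1/y - 1" using y by (intro ln_le_minus_one) simp
  hence "1 - 1/y \<le> ln y" using y by (simp add: ln_div)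
  thus ?thesis by (simp add: log_def divide_right_mono)
qed

lemma log_sum_ineq:
  fixes a b :: "'i \<Rightarrow> real"
  assumes fin: "finite I" and ne: "I \<noteq> {}" and pos: "\<And>i. i \<in> I \<Longrightarrow> 0 < a i \<and> 0 < b i"
    and B: "sum b I \<le> B"
  shows "sum a I * log 2 (sum a I / B) \<le> (\<Sum>i\<in>I. a i * log 2 (a i / b i))"
proof -
  define A where "A = sum a I"
  define B0 where "B0 = sum b I"
  have A0: "A > 0" unfolding A_def using fin ne pos by (intro sum_pos) auto
  have B00: "B0 > 0" unfolding B0_def using fin ne pos by (intro sum_pos) auto
  have "A * log 2 (A / B) \<le> A * log 2 (A / B0)"
    using A0 B00 B unfolding B0_def[symmetric]
    by (intro mult_left_mono) (auto intro!: divide_left_mono mult_pos_pos)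
  also have "\<dots> = (\<Sum>i\<in>I. a i * log 2 (A/B0) + (a i - b i * (A/B0)) / ln 2)"
  proof -
    have "(\<Sum>i\<in>I. (a i - b i * (A/B0)) / ln 2) = (A - B0 * (A/B0)) / ln 2"
      unfolding A_def B0_def by (simp add: sum_divide_distrib[symmetric] sum_subtractf sum_distrib_right)
    also have "\<dots> = 0" using B00 by simp
    finally show ?thesis by (simp add: sum.distrib A_def sum_distrib_right)
  qed
  also have "\<dots> \<le> (\<Sum>i\<in>I. a i * log 2 (a i / b i))"
  proof (rule sum_mono)
    fix i assume i: "i \<in> I"
    have ai: "a i > 0" and bi: "b i > 0" using pos[OF i] by auto
    define y where "y = (a i / b i) / (A / B0)"
    have y0: "y > 0" unfolding y_def using ai bi A0 B00 by simp
    have "log 2 (a i / b i) = log 2 (A/B0) + log 2 y"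
      unfolding y_def using ai bi A0 B00 by (simp add: log_divide log_mult)
    moreover have "(1 - 1/y) / ln 2 \<le> log 2 y" by (rule log2_ge[OF y0])
    moreover have "a i * ((1 - 1/y) / ln 2) = (a i - b i * (A/B0)) / ln 2"
      unfolding y_def using ai bi A0 B00 by (simp add: field_simps)
    ultimately have "a i * log 2 (A/B0) + (a i - b i * (A/B0)) / ln 2 \<le> a i * log 2 (A/B0) + a i * log 2 y"
      using ai by (metis add_left_mono mult_left_mono less_imp_le)
    also have "\<dots> = a i * log 2 (a i / b i)" 
      using \<open>log 2 (a i / b i) = _\<close> by (simp add: distrib_left)
    finally show "a i * log 2 (A/B0) + (a i - b i * (A/B0)) / ln 2 \<le> a i * log 2 (a i / b i)" .
  qed
  finally show ?thesis unfolding A_def .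
qed



lemma measure_fin: "finite (set_pmf p) \<Longrightarrow> measure_pmf.prob p A = sum (pmf p) (A \<inter> set_pmf p)"
  by (metis measure_Int_set_pmf measure_measure_pmf_finite finite_Int)

lemma pmf_le_marg: "pmf p (a, b) \<le> pmf (map_pmf snd p) b"
proof -
  have "pmf p (a,b) = measure_pmf.prob p {(a,b)}" by (simp add: measure_pmf_single)
  also have "\<dots> \<le> measure_pmf.prob p (snd -` {b})" by (intro measure_pmf.finite_measure_mono) auto
  also have "\<dots> = pmf (map_pmf snd p) b" by (simp add: pmf_map)
  finally show ?thesis .
qed

lemma CE_nonneg:
  assumes "finite (set_pmf p)"
  shows "0 \<le> cond_entropy p"
proof -
  have "(\<Sum>ab\<in>set_pmf p. pmf p ab * log 2 (pmf p ab / pmf (map_pmf snd p) (snd ab))) \<le> 0"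
  proof (rule sum_nonpos)
    fix ab assume ab: "ab \<in> set_pmf p"
    obtain a b where [simp]: "ab = (a,b)" by (cases ab)
    have p0: "pmf p ab > 0" using ab by (simp add: pmf_positive)
    have le: "pmf p ab \<le> pmf (map_pmf snd p) (snd ab)" using pmf_le_marg[of p a b] by simp
    have "pmf p ab / pmf (map_pmf snd p) (snd ab) \<le> 1" using p0 le by simp
    hence "log 2 (pmf p ab / pmf (map_pmf snd p) (snd ab)) \<le> 0"
      using p0 le by (subst log_le_zero_cancel_iff) auto
    thus "pmf p ab * log 2 (pmf p ab / pmf (map_pmf snd p) (snd ab)) \<le> 0"
      using p0 by (simp add: mult_nonneg_nonpos)
  qed
  thus ?thesis unfolding cond_entropy_def by simp
qed

lemma DP:
  fixes p :: "('a \<times> 'b) pmf" and f :: "'b \<Rightarrow> 'c"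
  assumes fin: "finite (set_pmf p)"
  shows "cond_entropy p \<le> cond_entropy (map_pmf (\<lambda>(a,b). (a, f b)) p)"
proof -
  define g :: "'a \<times> 'b \<Rightarrow> 'a \<times> 'c" where "g = (\<lambda>(a,b). (a, f b))"
  define q where "q = map_pmf g p"
  define pm where "pm = map_pmf snd p"
  define qm where "qm = map_pmf snd q"
  have Q: "set_pmf q = g ` set_pmf p" unfolding q_def by simp
  have finQ: "finite (set_pmf q)" using Q fin by simp
  have finpm: "finite (set_pmf pm)" unfolding pm_def using fin by simp
  have qm: "qm = map_pmf f pm" unfolding qm_def pm_def q_def
    by (simp add: pmf.map_comp g_def o_def case_prod_beta)
  define t where "t = (\<lambda>ab. pmf p ab * log 2 (pmf p ab / pmf pm (snd ab)))"
  define u where "u = (\<lambda>ac. pmf q ac * log 2 (pmf q ac / pmf qm (snd ac)))"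
  have "(\<Sum>ac\<in>set_pmf q. u ac) \<le> (\<Sum>ac\<in>set_pmf q. sum t {x \<in> set_pmf p. g x = ac})"
  proof (rule sum_mono)
    fix ac assume ac: "ac \<in> set_pmf q"
    define F where "F = {x \<in> set_pmf p. g x = ac}"
    have finF: "finite F" unfolding F_def using fin by simp
    have neF: "F \<noteq> {}" unfolding F_def using ac Q by auto
    have sa: "sum (pmf p) F = pmf q ac"
      unfolding q_def pmf_map measure_fin[OF fin] F_def by (intro sum.cong) auto
    have fstF: "\<And>x. x \<in> F \<Longrightarrow> fst x = fst ac" unfolding F_def g_def by auto
    have injF: "inj_on snd F"
      by (intro inj_onI) (metis fstF prod.expand)
    have "(\<Sum>x\<in>F. pmf pm (snd x)) = (\<Sum>y\<in>snd ` F. pmf pm y)"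
      by (simp add: sum.reindex[OF injF])
    also have "\<dots> \<le> (\<Sum>y\<in>set_pmf pm \<inter> f -` {snd ac}. pmf pm y)"
    proof (rule sum_mono2)
      show "finite (set_pmf pm \<inter> f -` {snd ac})" using finpm by simp
      show "snd ` F \<subseteq> set_pmf pm \<inter> f -` {snd ac}"
        unfolding F_def pm_def g_def by (force split: prod.splits)
    qed simp
    also have "\<dots> = pmf qm (snd ac)"
      unfolding qm pmf_map measure_fin[OF finpm] by (intro sum.cong) auto
    finally have sb: "(\<Sum>x\<in>F. pmf pm (snd x)) \<le> pmf qm (snd ac)" .
    have pos: "\<And>x. x \<in> F \<Longrightarrow> 0 < pmf p x \<and> 0 < pmf pm (snd x)"
    proof -
      fix x assume "x \<in> F"
      hence x: "x \<in> set_pmf p" unfolding F_def by simp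
      hence "0 < pmf p x" by (simp add: pmf_positive)
      moreover have "pmf p x \<le> pmf pm (snd x)" unfolding pm_def
        using pmf_le_marg[of p "fst x" "snd x"] by simp
      ultimately show "0 < pmf p x \<and> 0 < pmf pm (snd x)" by simp
    qed
    have "sum (pmf p) F * log 2 (sum (pmf p) F / pmf qm (snd ac)) \<le> (\<Sum>x\<in>F. pmf p x * log 2 (pmf p x / pmf pm (snd x)))"
      by (rule log_sum_ineq[OF finF neF pos sb])
    thus "u ac \<le> sum t F" unfolding u_def t_def sa .
  qed
  also have "\<dots> = sum t (set_pmf p)"
    by (rule sum.group[OF fin finQ]) (simp add: Q)
  finally have "sum u (set_pmf q) \<le> sum t (set_pmf p)" .
  thus ?thesis unfolding cond_entropy_def u_def t_def q_def qm_def pm_def g_def by simp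
qed



lemma pmf_bind_fin:
  assumes "finite (set_pmf w)"
  shows "pmf (bind_pmf w P) x = (\<Sum>t\<in>set_pmf w. pmf w t * pmf (P t) x)"
  unfolding pmf_bind using assms
  by (subst integral_measure_pmf_real[where A="set_pmf w"]) (auto simp: mult.commute)

lemma MIX:
  fixes w :: "'t pmf" and P :: "'t \<Rightarrow> ('a \<times> 'b) pmf"
  assumes fw: "finite (set_pmf w)" and fP: "\<And>t. t \<in> set_pmf w \<Longrightarrow> finite (set_pmf (P t))"
  shows "(\<Sum>t\<in>set_pmf w. pmf w t * cond_entropy (P t)) \<le> cond_entropy (bind_pmf w P)"
proof -
  define W where "W = set_pmf w"
  define q where "q = bind_pmf w P"
  define qm where "qm = map_pmf snd q"
  define Pm where "Pm = (\<lambda>t. map_pmf snd (P t))"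
  have Q: "set_pmf q = (\<Union>t\<in>W. set_pmf (P t))" unfolding q_def W_def by simp
  have finQ: "finite (set_pmf q)" using Q fw fP unfolding W_def by auto
  have finW: "finite W" using fw W_def by simp
  have pq: "pmf q x = (\<Sum>t\<in>W. pmf w t * pmf (P t) x)" for x
    unfolding q_def W_def by (rule pmf_bind_fin[OF fw])
  have qm_eq: "qm = bind_pmf w Pm" unfolding qm_def q_def Pm_def by (simp add: map_bind_pmf)
  have pqm: "pmf qm y = (\<Sum>t\<in>W. pmf w t * pmf (Pm t) y)" for y
    unfolding qm_eq W_def by (rule pmf_bind_fin[OF fw])
  define h where "h = (\<lambda>t x. pmf w t * pmf (P t) x * log 2 (pmf (P t) x / pmf (Pm t) (snd x)))"
  have "(\<Sum>t\<in>W. pmf w t * cond_entropy (P t)) = - (\<Sum>t\<in>W. \<Sum>x\<in>set_pmf (P t). h t x)"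
    unfolding cond_entropy_def h_def Pm_def
    by (simp add: sum_distrib_left sum_negf mult.assoc)
  also have "(\<Sum>t\<in>W. \<Sum>x\<in>set_pmf (P t). h t x) = (\<Sum>t\<in>W. \<Sum>x\<in>{x\<in>set_pmf q. x \<in> set_pmf (P t)}. h t x)"
    by (intro sum.cong refl) (auto simp: Q)
  also have "\<dots> = (\<Sum>x\<in>set_pmf q. \<Sum>t\<in>{t\<in>W. x \<in> set_pmf (P t)}. h t x)"
    by (rule sum.swap_restrict[OF finW finQ])
  finally have L: "(\<Sum>t\<in>W. pmf w t * cond_entropy (P t)) = - (\<Sum>x\<in>set_pmf q. \<Sum>t\<in>{t\<in>W. x \<in> set_pmf (P t)}. h t x)" .
  have "(\<Sum>x\<in>set_pmf q. pmf q x * log 2 (pmf q x / pmf qm (snd x))) \<le> (\<Sum>x\<in>set_pmf q. \<Sum>t\<in>{t\<in>W. x \<in> set_pmf (P t)}. h t x)"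
  proof (rule sum_mono)
    fix x assume x: "x \<in> set_pmf q"
    define I where "I = {t\<in>W. x \<in> set_pmf (P t)}"
    define a where "a = (\<lambda>t. pmf w t * pmf (P t) x)"
    define b where "b = (\<lambda>t. pmf w t * pmf (Pm t) (snd x))"
    have finI: "finite I" unfolding I_def using finW by simp
    have neI: "I \<noteq> {}" unfolding I_def using x Q by auto
    have pos: "0 < a t \<and> 0 < b t" if t: "t \<in> I" for t
    proof -
      have w0: "pmf w t > 0" using t unfolding I_def W_def by (simp add: pmf_positive)
      have p0: "pmf (P t) x > 0" using t unfolding I_def by (simp add: pmf_positive)
      have "pmf (P t) x \<le> pmf (Pm t) (snd x)" unfolding Pm_def
        using pmf_le_marg[of "P t" "fst x" "snd x"] by simp
      thus ?thesis unfolding a_def b_def using w0 p0 by simp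
    qed
    have sa: "sum a I = pmf q x"
      unfolding pq a_def I_def
      by (rule sum.mono_neutral_left[OF finW]) (auto simp: set_pmf_eq)
    have sb: "sum b I \<le> pmf qm (snd x)"
      unfolding pqm b_def
      by (rule sum_mono2[OF finW]) (auto simp: I_def)
    have "sum a I * log 2 (sum a I / pmf qm (snd x)) \<le> (\<Sum>t\<in>I. a t * log 2 (a t / b t))"
      by (rule log_sum_ineq[OF finI neI pos sb])
    also have "\<dots> = (\<Sum>t\<in>I. h t x)"
    proof (intro sum.cong refl)
      fix t assume t: "t \<in> I"
      have w0: "pmf w t > 0" using t unfolding I_def W_def by (simp add: pmf_positive)
      show "a t * log 2 (a t / b t) = h t x" unfolding a_def b_def h_def using w0 by simp
    qed
    finally show "pmf q x * log 2 (pmf q x / pmf qm (snd x)) \<le> (\<Sum>t\<in>I. h t x)" unfolding sa .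
  qed
  hence "- (\<Sum>x\<in>set_pmf q. \<Sum>t\<in>{t\<in>W. x \<in> set_pmf (P t)}. h t x) \<le> cond_entropy q"
    unfolding cond_entropy_def qm_def by simp
  thus ?thesis using L unfolding W_def q_def by simp
qed



primrec kept :: "real \<Rightarrow> nat \<Rightarrow> nat set pmf" where
  "kept a 0 = return_pmf {}"
| "kept a (Suc n) = do { k \<leftarrow> bernoulli_pmf a; T \<leftarrow> kept a n;
       return_pmf (if k then insert 0 (Suc ` T) else Suc ` T) }"

definition ind :: "nat set \<Rightarrow> nat \<Rightarrow> bool list" where
  "ind T n = map (\<lambda>i. i \<in> T) [0..<n]"

lemma view_Cons_in: "view (insert 0 (Suc ` T)) (b # xs) = Some b # view T xs"
  unfolding view_def by (auto simp: upt_conv_Cons map_Suc_upt[symmetric] image_iff simp del: upt_Suc)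

lemma view_Cons_out: "view (Suc ` T) (b # xs) = None # view T xs"
  unfolding view_def by (auto simp: upt_conv_Cons map_Suc_upt[symmetric] image_iff simp del: upt_Suc)

lemma ind_Cons_in: "ind (insert 0 (Suc ` T)) (Suc n) = True # ind T n"
  unfolding ind_def by (auto simp: upt_conv_Cons map_Suc_upt[symmetric] image_iff simp del: upt_Suc)

lemma ind_Cons_out: "ind (Suc ` T) (Suc n) = False # ind T n"
  unfolding ind_def by (auto simp: upt_conv_Cons map_Suc_upt[symmetric] image_iff simp del: upt_Suc)

lemma bec_kept: "bec_pmf a x = map_pmf (\<lambda>T. view T x) (kept a (length x))"
proof (induction x)
  case Nil
  then show ?case by (simp add: view_def)
next
  case (Cons b xs)
  show ?case
    unfolding bec_pmf.simps kept.simps map_bind_pmf Cons length_Cons bind_map_pmf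
    by (intro bind_pmf_cong refl) (simp add: view_Cons_in view_Cons_out)
qed

lemma bsc_kept: "bsc_pmf p x = map_pmf (\<lambda>T. xor_word x (ind T (length x))) (kept p (length x))"
proof (induction x)
  case Nil
  then show ?case by (simp add: ind_def xor_word_def)
next
  case (Cons b xs)
  show ?case
    unfolding bsc_pmf.simps kept.simps map_bind_pmf Cons length_Cons bind_map_pmf
    by (intro bind_pmf_cong refl) (auto simp: ind_Cons_in ind_Cons_out xor_word_def)
qed

lemma kept_sub: "T \<in> set_pmf (kept a n) \<Longrightarrow> T \<subseteq> {..<n}"
proof (induction n arbitrary: T)
  case 0 then show ?case by simp
next
  case (Suc n)
  then show ?case by (auto split: if_splits)
qed

lemma kept_fin: "finite (set_pmf (kept a n))"
  by (rule finite_subset[of _ "Pow {..<n}"]) (auto dest: kept_sub)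

lemma kept_empty: "0 \<le> a \<Longrightarrow> a < 1 \<Longrightarrow> {} \<in> set_pmf (kept a n)"
proof (induction n)
  case 0 then show ?case by simp
next
  case (Suc n)
  have "False \<in> set_pmf (bernoulli_pmf a)" using Suc.prems by (simp add: set_pmf_iff pmf_bernoulli_False)
  then show ?case using Suc by (auto intro!: bexI[of _ False] bexI[of _ "{}"])
qed

lemma card_kept:
  assumes "a \<in> {0..1}"
  shows "map_pmf card (kept a n) = binomial_pmf n a"
proof (induction n)
  case 0 then show ?case using assms by (simp add: binomial_pmf_0)
next
  case (Suc n)
  have "map_pmf card (kept a (Suc n)) =
     do { k \<leftarrow> bernoulli_pmf a; T \<leftarrow> kept a n; return_pmf ((if k then 1 else 0) + card T) }"
    unfolding kept.simps map_bind_pmf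
  proof (intro bind_pmf_cong refl)
    fix k T assume T: "T \<in> set_pmf (kept a n)"
    have "finite T" using kept_sub[OF T] finite_subset by blast
    thus "map_pmf card (return_pmf (if k then insert 0 (Suc ` T) else Suc ` T)) = return_pmf ((if k then 1 else 0) + card T)"
      by (simp add: card_image)
  qed
  also have "\<dots> = do { k \<leftarrow> bernoulli_pmf a; j \<leftarrow> map_pmf card (kept a n); return_pmf ((if k then 1 else 0) + j) }"
    by (simp add: bind_map_pmf)
  also have "\<dots> = binomial_pmf (Suc n) a" using assms by (simp add: Suc binomial_pmf_Suc)
  finally show ?case .
qed

lemma kept_tail:
  assumes "a \<in> {0..1}" "0 < n" "0 \<le> \<xi>"
  shows "measure_pmf.prob (kept a n) {T. (a + \<xi>) * real n \<le> real (card T)} \<le> exp (- 2 * real n * \<xi>\<^sup>2)"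
proof -
  interpret binomial_distribution n a using assms by unfold_locales simp
  have "measure_pmf.prob (kept a n) {T. (a + \<xi>) * real n \<le> real (card T)}
      = measure_pmf.prob (map_pmf card (kept a n)) {x. (a + \<xi>) * real n \<le> real x}"
    by (simp add: measure_map_pmf vimage_def)
  also have "\<dots> = measure_pmf.prob (binomial_pmf n a) {x. real x / real n \<ge> a + \<xi>}"
    using assms by (simp add: card_kept pos_le_divide_eq)
  also have "\<dots> \<le> exp (- 2 * real n * \<xi>\<^sup>2)" using prob_ge'[OF assms(2,3)] by simp
  finally show ?thesis .
qed

lemma ind_len[simp]: "length (ind T n) = n" by (simp add: ind_def)

lemma weight_ind: "T \<subseteq> {..<n} \<Longrightarrow> weight (ind T n) = card T"
  unfolding weight_def ind_def by (intro arg_cong[where f=card]) auto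



lemma prob_bind:
  "measure_pmf.prob (bind_pmf M f) A = measure_pmf.expectation M (\<lambda>x. measure_pmf.prob (f x) A)"
proof -
  have int: "integrable (measure_pmf M) (\<lambda>x. measure_pmf.prob (f x) A)"
    by (intro measure_pmf.integrable_const_bound[where B=1]) auto
  have "ennreal (measure_pmf.prob (bind_pmf M f) A) = emeasure (measure_pmf (bind_pmf M f)) A"
    by (simp add: measure_pmf.emeasure_eq_measure)
  also have "\<dots> = (\<integral>\<^sup>+x. emeasure (measure_pmf (f x)) A \<partial>M)" by (rule emeasure_bind_pmf)
  also have "\<dots> = (\<integral>\<^sup>+x. ennreal (measure_pmf.prob (f x) A) \<partial>M)"
    by (simp add: measure_pmf.emeasure_eq_measure)
  also have "\<dots> = ennreal (measure_pmf.expectation M (\<lambda>x. measure_pmf.prob (f x) A))"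
    by (rule nn_integral_eq_integral[OF int]) auto
  finally show ?thesis by (simp add: integral_nonneg_AE)
qed

lemma prob_bind_le:
  assumes "\<And>x. x \<in> set_pmf M \<Longrightarrow> measure_pmf.prob (f x) A \<le> measure_pmf.prob (g x) B + e"
  shows "measure_pmf.prob (bind_pmf M f) A \<le> measure_pmf.prob (bind_pmf M g) B + e"
proof -
  have int1: "integrable (measure_pmf M) (\<lambda>x. measure_pmf.prob (f x) A)"
    by (intro measure_pmf.integrable_const_bound[where B=1]) auto
  have int2: "integrable (measure_pmf M) (\<lambda>x. measure_pmf.prob (g x) B)"
    by (intro measure_pmf.integrable_const_bound[where B=1]) auto
  have "measure_pmf.prob (bind_pmf M f) A \<le> measure_pmf.expectation M (\<lambda>x. measure_pmf.prob (g x) B + e)"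
    unfolding prob_bind
    by (rule integral_mono_AE[OF int1]) (use int2 assms in \<open>auto simp: AE_measure_pmf_iff\<close>)
  also have "\<dots> = measure_pmf.prob (bind_pmf M g) B + e"
    unfolding prob_bind using int2 by simp
  finally show ?thesis .
qed

lemma finite_len: "finite {x :: bool list. length x = n}"
proof -
  have "{x :: bool list. length x = n} = {xs. set xs \<subseteq> UNIV \<and> length xs = n}" by auto
  thus ?thesis using finite_lists_length_eq[of "UNIV :: bool set" n] by simp
qed

lemma set_msg: "K \<ge> 1 \<Longrightarrow> set_pmf (msg_pmf K) = {..<K}"
  unfolding msg_pmf_def by (subst set_pmf_of_set) (auto simp: lessThan_empty_iff)

lemma fin_J:
  assumes "is_code n K enc"
  shows "finite (set_pmf (adv_view_joint K enc T))"
proof (rule finite_subset)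
  show "set_pmf (adv_view_joint K enc T) \<subseteq> {..<K} \<times> (view T ` {x. length x = n})"
    using assms unfolding adv_view_joint_def is_code_def by (auto simp: set_msg)
  show "finite ({..<K} \<times> (view T ` {x. length x = n}))" using finite_len by simp
qed

definition mask :: "nat set \<Rightarrow> bool option list \<Rightarrow> bool option list" where
  "mask T v = map (\<lambda>i. if i \<in> T then v ! i else None) [0..<length v]"

lemma mask_view: "T \<subseteq> S \<Longrightarrow> mask T (view S x) = view T x"
  unfolding mask_def view_def by auto

lemma J_mask: "T \<subseteq> S \<Longrightarrow>
  adv_view_joint K enc T = map_pmf (\<lambda>(m,v). (m, mask T v)) (adv_view_joint K enc S)"
  unfolding adv_view_joint_def by (simp add: map_bind_pmf mask_view)

lemma equiv_part:
  assumes code: "is_code n K enc" and \<rho>: "0 < \<rho>" "\<rho> < 1" and a: "a \<in> {0..1}"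
    and tail: "measure_pmf.prob (kept a n) {T. nat \<lfloor>\<rho> * real n\<rfloor> < card T} \<le> e"
  shows "adv_equivocation \<rho> n K enc * (1 - e) \<le> rand_equivocation K enc a"
proof -
  define k where "k = nat \<lfloor>\<rho> * real n\<rfloor>"
  have kn: "k \<le> n"
  proof -
    have "\<rho> * real n \<le> real n" using \<rho> by (intro mult_left_le_one_le) auto
    hence "\<lfloor>\<rho> * real n\<rfloor> \<le> int n" by linarith
    thus ?thesis unfolding k_def by simp
  qed
  define J where "J = (\<lambda>T. adv_view_joint K enc T)"
  define w where "w = kept a n"
  define E where "E = {cond_entropy (J S) | S. S \<subseteq> {..<n} \<and> card S = k}"
  define adv where "adv = adv_equivocation \<rho> n K enc"
  have adv_def': "adv = Min E" unfolding adv_def adv_equivocation_def E_def J_def k_def by simp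
  have finE: "finite E"
  proof (rule finite_subset)
    show "E \<subseteq> (\<lambda>S. cond_entropy (J S)) ` Pow {..<n}" unfolding E_def by auto
  qed simp
  have neE: "E \<noteq> {}" unfolding E_def using kn by (auto intro!: exI[of _ "{..<k}"])
  have adv0: "0 \<le> adv"
  proof -
    have "adv \<in> E" unfolding adv_def' using finE neE by (rule Min_in)
    thus ?thesis unfolding E_def J_def using CE_nonneg[OF fin_J[OF code]] by auto
  qed
  have mix: "rand_equivocation K enc a = cond_entropy (bind_pmf w J)"
  proof -
    have "do { m \<leftarrow> msg_pmf K; x \<leftarrow> enc m; z \<leftarrow> bec_pmf a x; return_pmf (m, z) }
        = do { m \<leftarrow> msg_pmf K; x \<leftarrow> enc m; T \<leftarrow> w; return_pmf (m, view T x) }"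
    proof (intro bind_pmf_cong refl)
      fix m x assume m: "m \<in> set_pmf (msg_pmf K)" and x: "x \<in> set_pmf (enc m)"
      have "length x = n" using m x code unfolding is_code_def by (auto simp: set_msg)
      thus "bec_pmf a x \<bind> (\<lambda>z. return_pmf (m, z)) = w \<bind> (\<lambda>T. return_pmf (m, view T x))"
        unfolding w_def by (simp add: bec_kept bind_map_pmf)
    qed
    also have "\<dots> = bind_pmf w J"
      unfolding J_def adv_view_joint_def by (simp add: bind_commute_pmf[of w])
    finally show ?thesis unfolding rand_equivocation_def by simp
  qed
  have finw: "finite (set_pmf w)" unfolding w_def by (rule kept_fin)
  have step: "(\<Sum>t\<in>set_pmf w. pmf w t * cond_entropy (J t)) \<le> rand_equivocation K enc a"
    unfolding mix J_def by (rule MIX[OF finw fin_J[OF code]])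
  have pt: "pmf w T * (if card T \<le> k then adv else 0) \<le> pmf w T * cond_entropy (J T)"
    if T: "T \<in> set_pmf w" for T
  proof (cases "card T \<le> k")
    case True
    have Tsub: "T \<subseteq> {..<n}" using T kept_sub unfolding w_def by blast
    have "k - card T \<le> card ({..<n} - T)"
      using Tsub kn by (simp add: card_Diff_subset finite_subset)
    then obtain U where U: "U \<subseteq> {..<n} - T" "card U = k - card T" "finite U"
      by (rule obtain_subset_with_card_n)
    define S where "S = T \<union> U"
    have finT: "finite T" using Tsub finite_subset by blast
    have S1: "S \<subseteq> {..<n}" "T \<subseteq> S" unfolding S_def using Tsub U by auto
    have "card S = card T + card U" unfolding S_def using U finT by (subst card_Un_disjoint) auto
    hence S2: "card S = k" using U True by simp
    have "adv \<le> cond_entropy (J S)" unfolding adv_def' using finE S1 S2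
      by (intro Min_le) (auto simp: E_def)
    also have "\<dots> \<le> cond_entropy (J T)" unfolding J_def J_mask[OF S1(2)]
      by (rule DP[OF fin_J[OF code]])
    finally show ?thesis using True by (simp add: mult_left_mono)
  next
    case False
    thus ?thesis using CE_nonneg[OF fin_J[OF code]] unfolding J_def by simp
  qed
  have "(\<Sum>t\<in>set_pmf w. pmf w t * (if card t \<le> k then adv else 0)) = adv * measure_pmf.prob w {T. card T \<le> k}"
    unfolding measure_fin[OF finw] sum_distrib_left
    by (rule sum.mono_neutral_cong_right[OF finw]) (auto simp: mult.commute)
  moreover have "measure_pmf.prob w {T. card T \<le> k} \<ge> 1 - e"
  proof -
    have "measure_pmf.prob w {T. card T \<le> k} = 1 - measure_pmf.prob w (- {T. card T \<le> k})"
      using measure_pmf.prob_compl[of "{T. card T \<le> k}" w] by (simp add: Compl_eq_Diff_UNIV)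
    also have "- {T. card T \<le> k} = {T. k < card T}" by auto
    finally show ?thesis using tail unfolding w_def k_def by simp
  qed
  ultimately have "adv * (1 - e) \<le> (\<Sum>t\<in>set_pmf w. pmf w t * (if card t \<le> k then adv else 0))"
    using adv0 by (simp add: mult_left_mono)
  also have "\<dots> \<le> (\<Sum>t\<in>set_pmf w. pmf w t * cond_entropy (J t))" by (intro sum_mono pt)
  also note step
  finally show ?thesis unfolding adv_def .
qed



lemma err_part:
  assumes code: "is_code n K enc" and \<rho>r: "0 < \<rho>r" "\<rho>r < 1" and \<rho>w: "0 \<le> \<rho>w"
    and b: "0 \<le> b" "b < 1"
    and adv: "\<And>S err. adv_strategy \<rho>r \<rho>w n S err \<Longrightarrow> adv_error K enc dec S err \<le> \<delta>"
    and tail: "measure_pmf.prob (kept b n) {T. \<rho>w * real n < real (card T)} \<le> e"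
  shows "rand_error K enc dec b \<le> \<delta> + e"
proof -
  define k where "k = nat \<lfloor>\<rho>r * real n\<rfloor>"
  have kn: "k \<le> n"
  proof -
    have "\<rho>r * real n \<le> real n" using \<rho>r by (intro mult_left_le_one_le) auto
    hence "\<lfloor>\<rho>r * real n\<rfloor> \<le> int n" by linarith
    thus ?thesis unfolding k_def by simp
  qed
  define kb where "kb = kept b n"
  define Sm :: "nat set set" where "Sm = {T. real (card T) \<le> \<rho>w * real n}"
  have ne: "set_pmf kb \<inter> Sm \<noteq> {}"
  proof -
    have "{} \<in> set_pmf kb \<inter> Sm" using kept_empty[OF b] \<rho>w unfolding kb_def Sm_def by auto
    thus ?thesis by blast
  qed
  define c where "c = cond_pmf kb Sm"
  define err where "err = (\<lambda>v::bool option list. map_pmf (\<lambda>T. ind T n) c)"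
  define S0 where "S0 = {..<k}"
  have strat: "adv_strategy \<rho>r \<rho>w n S0 err"
    unfolding adv_strategy_def
  proof (intro conjI allI ballI)
    show "S0 \<subseteq> {..<n}" using kn unfolding S0_def by auto
    show "card S0 = nat \<lfloor>\<rho>r * real n\<rfloor>" unfolding S0_def k_def by simp
    fix v e assume e: "e \<in> set_pmf (err v)"
    then obtain T where T: "T \<in> set_pmf kb" "T \<in> Sm" and eT: "e = ind T n"
      unfolding err_def c_def using ne by (auto simp: set_cond_pmf)
    show "length e = n" using eT by simp
    have "T \<subseteq> {..<n}" using T kept_sub unfolding kb_def by blast
    thus "real (weight e) \<le> \<rho>w * real n" using T(2) eT weight_ind unfolding Sm_def by simp
  qed
  have finkb: "finite (set_pmf kb)" unfolding kb_def by (rule kept_fin)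
  have "rand_error K enc dec b \<le> adv_error K enc dec S0 err + e"
    unfolding rand_error_def adv_error_def
  proof (intro prob_bind_le)
    fix m x assume m: "m \<in> set_pmf (msg_pmf K)" and x: "x \<in> set_pmf (enc m)"
    have lx: "length x = n" using m x code unfolding is_code_def by (auto simp: set_msg)
    define V where "V = {T. dec (xor_word x (ind T n)) \<noteq> m}"
    have L: "measure_pmf.prob (bsc_pmf b x \<bind> (\<lambda>y. return_pmf (m, dec y))) {(m, m'). m' \<noteq> m}
        = measure_pmf.prob kb V"
      unfolding bsc_kept lx kb_def V_def map_pmf_def[symmetric]
      by (simp add: measure_map_pmf pmf.map_comp o_def vimage_def)
    have R: "measure_pmf.prob (err (view S0 x) \<bind> (\<lambda>e. return_pmf (m, dec (xor_word x e)))) {(m, m'). m' \<noteq> m}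
        = measure_pmf.prob c V"
      unfolding err_def V_def map_pmf_def[symmetric]
      by (simp add: measure_map_pmf pmf.map_comp o_def vimage_def)
    have pSm: "0 < measure_pmf.prob kb Sm"
      using ne by (auto intro: measure_pmf_posI)
    have "measure_pmf.prob c V = measure_pmf.prob kb (V \<inter> Sm) / measure_pmf.prob kb Sm"
    proof -
      have finc: "finite (set_pmf c)" unfolding c_def using ne finkb by (simp add: set_cond_pmf)
      have "measure_pmf.prob c V = (\<Sum>T\<in>V \<inter> set_pmf c. pmf kb T / measure_pmf.prob kb Sm)"
        using ne by (subst measure_fin[OF finc], unfold c_def, intro sum.cong refl) (auto simp: pmf_cond set_cond_pmf)
      also have "\<dots> = measure_pmf.prob kb (V \<inter> Sm) / measure_pmf.prob kb Sm"
        unfolding measure_fin[OF finkb] sum_divide_distrib c_def using ne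
        by (intro arg_cong2[where f="(/)"] sum.cong) (auto simp: set_cond_pmf)
      finally show ?thesis .
    qed
    hence le1: "measure_pmf.prob kb (V \<inter> Sm) \<le> measure_pmf.prob c V"
      using pSm measure_pmf.prob_le_1[of kb Sm]
      by (simp add: le_divide_eq mult_left_le measure_nonneg)
    have "measure_pmf.prob kb V \<le> measure_pmf.prob kb ((V \<inter> Sm) \<union> (- Sm))"
      by (intro measure_pmf.finite_measure_mono) auto
    also have "\<dots> \<le> measure_pmf.prob kb (V \<inter> Sm) + measure_pmf.prob kb (- Sm)"
      by (rule measure_subadditive) auto
    also have "- Sm = {T. \<rho>w * real n < real (card T)}" unfolding Sm_def by auto
    finally have "measure_pmf.prob kb V \<le> measure_pmf.prob c V + e"
      using le1 tail unfolding kb_def by simp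
    thus "measure_pmf.prob (bsc_pmf b x \<bind> (\<lambda>y. return_pmf (m, dec y))) {(m, m'). m' \<noteq> m}
        \<le> measure_pmf.prob (err (view S0 x) \<bind> (\<lambda>e. return_pmf (m, dec (xor_word x e)))) {(m, m'). m' \<noteq> m} + e"
      using L R by simp
  qed
  also have "\<dots> \<le> \<delta> + e" using adv[OF strat] by simp
  finally show ?thesis .
qed



theorem theorem3p2:
  fixes \<rho>r \<rho>w :: real
  assumes "0 < \<rho>r" "\<rho>r < 1" "0 < \<rho>w" "\<rho>w < 1/2"
  shows "\<exists>\<xi>0>0. \<forall>\<xi>. 0 < \<xi> \<and> \<xi> < \<xi>0 \<longrightarrow>
           (\<exists>c>0. \<exists>N. \<forall>n\<ge>N. \<forall>K enc dec \<delta>.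
              is_code n K enc \<and> nn_decoder n K enc dec \<and>
              (\<forall>S err. adv_strategy \<rho>r \<rho>w n S err \<longrightarrow> adv_error K enc dec S err \<le> \<delta>) \<longrightarrow>
                rand_error K enc dec (\<rho>w - \<xi>) \<le> \<delta> + exp (- c * real n) \<and>
                rand_equivocation K enc (\<rho>r - \<xi>) / real n \<ge>
                  (adv_equivocation \<rho>r n K enc / real n) * (1 - exp (- c * real n)))"
proof (rule exI[of _ "min \<rho>r \<rho>w"], intro conjI allI impI)
  show "0 < min \<rho>r \<rho>w" using assms by simp
  fix \<xi> :: real assume \<xi>: "0 < \<xi> \<and> \<xi> < min \<rho>r \<rho>w"
  show "\<exists>c>0. \<exists>N. \<forall>n\<ge>N. \<forall>K enc dec \<delta>.
              is_code n K enc \<and> nn_decoder n K enc dec \<and>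
              (\<forall>S err. adv_strategy \<rho>r \<rho>w n S err \<longrightarrow> adv_error K enc dec S err \<le> \<delta>) \<longrightarrow>
                rand_error K enc dec (\<rho>w - \<xi>) \<le> \<delta> + exp (- c * real n) \<and>
                rand_equivocation K enc (\<rho>r - \<xi>) / real n \<ge>
                  (adv_equivocation \<rho>r n K enc / real n) * (1 - exp (- c * real n))"
  proof (rule exI[of _ "2 * \<xi>\<^sup>2"], rule conjI, use \<xi> in simp, rule exI[of _ "1::nat"], intro conjI allI impI)
    fix n :: nat and K enc dec \<delta>
    assume n: "1 \<le> n"
    assume H: "is_code n K enc \<and> nn_decoder n K enc dec \<and>
              (\<forall>S err. adv_strategy \<rho>r \<rho>w n S err \<longrightarrow> adv_error K enc dec S err \<le> \<delta>)"
    have n0: "0 < n" using n by simp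
    define e where "e = exp (- (2 * \<xi>\<^sup>2) * real n)"
    have eq: "exp (- 2 * real n * \<xi>\<^sup>2) = e" unfolding e_def by (simp add: algebra_simps)
    have b: "\<rho>w - \<xi> \<in> {0..1}" using \<xi> assms by auto
    have tw: "measure_pmf.prob (kept (\<rho>w - \<xi>) n) {T. \<rho>w * real n < real (card T)} \<le> e"
    proof -
      have "measure_pmf.prob (kept (\<rho>w - \<xi>) n) {T. \<rho>w * real n < real (card T)}
          \<le> measure_pmf.prob (kept (\<rho>w - \<xi>) n) {T. (\<rho>w - \<xi> + \<xi>) * real n \<le> real (card T)}"
        by (intro measure_pmf.finite_measure_mono) auto
      also have "\<dots> \<le> e" using kept_tail[OF b n0, of \<xi>] \<xi> eq by simp
      finally show ?thesis .
    qed
    show "rand_error K enc dec (\<rho>w - \<xi>) \<le> \<delta> + exp (- (2 * \<xi>\<^sup>2) * real n)"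
      unfolding e_def[symmetric]
      by (rule err_part[of n K enc \<rho>r \<rho>w "\<rho>w - \<xi>" dec \<delta>]) (use H assms \<xi> tw in auto)
    have a: "\<rho>r - \<xi> \<in> {0..1}" using \<xi> assms by auto
    have tr: "measure_pmf.prob (kept (\<rho>r - \<xi>) n) {T. nat \<lfloor>\<rho>r * real n\<rfloor> < card T} \<le> e"
    proof -
      have "measure_pmf.prob (kept (\<rho>r - \<xi>) n) {T. nat \<lfloor>\<rho>r * real n\<rfloor> < card T}
          \<le> measure_pmf.prob (kept (\<rho>r - \<xi>) n) {T. (\<rho>r - \<xi> + \<xi>) * real n \<le> real (card T)}"
      proof (intro measure_pmf.finite_measure_mono subsetI)
        fix T assume "T \<in> {T. nat \<lfloor>\<rho>r * real n\<rfloor> < card T}"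
        hence "nat \<lfloor>\<rho>r * real n\<rfloor> < card T" by simp
        hence "\<lfloor>\<rho>r * real n\<rfloor> < int (card T)" by linarith
        hence "\<rho>r * real n < real (card T)" by (simp add: floor_less_iff)
        thus "T \<in> {T. (\<rho>r - \<xi> + \<xi>) * real n \<le> real (card T)}" by simp
      qed simp
      also have "\<dots> \<le> e" using kept_tail[OF a n0, of \<xi>] \<xi> eq by simp
      finally show ?thesis .
    qed
    have "adv_equivocation \<rho>r n K enc * (1 - e) \<le> rand_equivocation K enc (\<rho>r - \<xi>)"
      by (rule equiv_part[OF _ _ _ a tr]) (use H assms in auto)
    hence "adv_equivocation \<rho>r n K enc * (1 - e) / real n \<le> rand_equivocation K enc (\<rho>r - \<xi>) / real n"
      using n0 by (simp add: divide_right_mono)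
    thus "adv_equivocation \<rho>r n K enc / real n * (1 - exp (- (2 * \<xi>\<^sup>2) * real n))
          \<le> rand_equivocation K enc (\<rho>r - \<xi>) / real n"
      unfolding e_def[symmetric] by (simp add: field_simps)
  qed
qed


end
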